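(* Let $p$ be an odd prime, $q$ an odd positive integer, and $a\in(\mathbb{Z}/pq\mathbb{Z})^*$ such that $a\bmod p$ generates $(\mathbb{Z}/p\mathbb{Z})^*$ and $a^{(p-1)/2}\equiv-1\pmod{pq}$. Suppose $q$ has a prime divisor $\ell\ge5$ which is a Fermat prime (i.e. of the form $2^{2^m}+1$) and a prime divisor $\ell'\equiv3\pmod 4$. Then $|S_{pq}(a)\cap(S_{pq}(a)+1)|=0$.
   Context: $S_{pq}(a)=\{a^j:0\le j<p-1\}\subseteq\mathbb{Z}/pq\mathbb{Z}$ and $S+1=\{s+1:s\in S\}$. *)

theory Defs
  imports "HOL-Number_Theory.Number_Theory"
begin

text \<open>Residues modulo n are represented by their canonical representatives in {0..<n}.\<close>

definition S_set :: "nat \<Rightarrow> nat \<Rightarrow> nat \<Rightarrow> nat set" where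
  "S_set p q a = {a ^ j mod (p * q) | j. j < p - 1}"

definition shift1 :: "nat \<Rightarrow> nat set \<Rightarrow> nat set" where
  "shift1 n S = {(s + 1) mod n | s. s \<in> S}"

definition fermat_prime :: "nat \<Rightarrow> bool" where
  "fermat_prime l \<longleftrightarrow> prime l \<and> (\<exists>m. l = 2 ^ (2 ^ m) + 1)"

end

theory Submission
  imports Defs
begin

lemma aux_basic:
  fixes a r d :: nat
  assumes r: "prime r" and nd: "\<not> r dvd a" and r2: "r > 2"
    and h: "[int a ^ d = - 1] (mod int r)"
  shows "ord r a dvd 2 * d" "ord r a dvd r - 1" "\<not> ord r a dvd d"
proof -
  have "[(int a ^ d)^2 = (-1)^2] (mod int r)" using h by (rule cong_pow)
  hence "[int (a ^ (2*d)) = int 1] (mod int r)"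
    by (simp add: power_mult[symmetric] mult.commute)
  hence "[a ^ (2*d) = 1] (mod r)" using cong_int_iff by blast
  thus "ord r a dvd 2 * d" using ord_divides by blast
  have "[a ^ (r - 1) = 1] (mod r)" using fermat_theorem[OF r nd] .
  thus "ord r a dvd r - 1" using ord_divides by blast
  show nd2: "\<not> ord r a dvd d"
  proof
    assume "ord r a dvd d"
    hence "[a ^ d = 1] (mod r)" using ord_divides by blast
    hence "[int (a ^ d) = int 1] (mod int r)" using cong_int_iff by blast
    hence "[int a ^ d = 1] (mod int r)" by simp
    hence "[1 = - 1] (mod int r)" using h by (meson cong_sym cong_trans)
    hence "int r dvd 2" by (simp add: cong_iff_dvd_diff)
    hence "r dvd 2" by presburger
    hence "r \<le> 2" by (simp add: dvd_imp_le)
    thus False using r2 by simp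
  qed
qed

lemma pow_cases:
  fixes a l j :: nat
  assumes "[a^2 = 1] (mod l)"
  shows "[a^j = 1] (mod l) \<or> [a^j = a] (mod l)"
proof -
  obtain k where "j = 2*k \<or> j = 2*k+1" by (metis dvd_mult_div_cancel odd_two_times_div_two_succ)
  moreover have k: "[a^(2*k) = 1] (mod l)"
  proof -
    have "[(a^2)^k = 1^k] (mod l)" using assms by (rule cong_pow)
    thus ?thesis by (simp add: power_mult)
  qed
  moreover have "[a^(2*k+1) = a] (mod l)"
  proof -
    have "[a^(2*k) * a = 1 * a] (mod l)" using k by (rule cong_mult) simp
    thus ?thesis by (simp add: mult.commute)
  qed
  ultimately show ?thesis by auto
qed

lemma no_shift:
  fixes a l j k :: nat
  assumes sq: "[a^2 = 1] (mod l)" and l5: "l \<ge> 5" and nd: "\<not> l dvd a"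
  shows "\<not> [a^j = a^k + 1] (mod l)"
proof
  assume h: "[a^j = a^k + 1] (mod l)"
  have cj: "[a^j = 1] (mod l) \<or> [a^j = a] (mod l)" by (rule pow_cases[OF sq])
  have ck: "[a^k = 1] (mod l) \<or> [a^k = a] (mod l)" by (rule pow_cases[OF sq])
  have ck1: "[a^k + 1 = 1 + 1] (mod l) \<or> [a^k + 1 = a + 1] (mod l)"
    using ck by (meson cong_add cong_refl)
  from cj ck1 h show False
  proof (elim disjE)
    assume a: "[a^j = 1] (mod l)" and b: "[a^k + 1 = 1 + 1] (mod l)"
    hence "[1 = 2] (mod l)" using h by (metis cong_sym cong_trans one_add_one)
    thus False using l5 by (simp add: cong_def)
  next
    assume a: "[a^j = 1] (mod l)" and b: "[a^k + 1 = a + 1] (mod l)"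
    hence "[0 + 1 = a + 1] (mod l)" using h by (metis cong_sym cong_trans add_0)
    hence "[0 = a] (mod l)" using cong_add_rcancel_nat by blast
    thus False using nd by (metis cong_dvd_iff dvd_0_right)
  next
    assume a: "[a^j = a] (mod l)" and b: "[a^k + 1 = 1 + 1] (mod l)"
    hence "[a = 2] (mod l)" using h by (metis cong_sym cong_trans one_add_one)
    hence "[a^2 = 2^2] (mod l)" by (rule cong_pow)
    hence "[1 = 4] (mod l)" using sq by (metis cong_sym cong_trans numeral_Bit0 power2_eq_square numeral_times_numeral semiring_norm(12) num_double)
    thus False using l5 by (simp add: cong_def)
  next
    assume a: "[a^j = a] (mod l)" and b: "[a^k + 1 = a + 1] (mod l)"
    hence "[a + 0 = a + 1] (mod l)" using h by (metis cong_sym cong_trans add_0_right)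
    hence "[0 = 1] (mod l)" using cong_add_lcancel_nat by blast
    thus False using l5 by (simp add: cong_def)
  qed
qed

lemma d_odd:
  fixes a r d :: nat
  assumes r: "prime r" and nd: "\<not> r dvd a" and r3: "[r = 3] (mod 4)"
    and h: "[int a ^ d = - 1] (mod int r)"
  shows "odd d"
proof
  assume de: "even d"
  have "r mod 4 = 3" using r3 by (simp add: cong_def)
  hence r2: "r > 2" by presburger
  note o = aux_basic[OF r nd r2 h]
  obtain u where u: "r - 1 = 2 * u" "odd u"
  proof -
    have "r mod 4 = 3" using r3 by (simp add: cong_def)
    hence "r - 1 = 2 * ((r - 1) div 2) \<and> odd ((r - 1) div 2)" by presburger
    thus ?thesis using that by blast
  qed
  have "ord r a dvd gcd (2*d) (2*u)" using o(1) o(2) u(1) by simp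
  hence o2: "ord r a dvd 2 * gcd d u" by (simp add: gcd_mult_distrib_nat)
  have "odd (gcd d u)" using u(2) by (meson dvd_trans gcd_dvd2)
  hence "coprime 2 (gcd d u)" by simp
  hence "2 * gcd d u dvd d" using de by (simp add: divides_mult)
  thus False using o2 o(3) dvd_trans by blast
qed

theorem mainTheorem10:
  fixes p q a l l' :: nat
  assumes "prime p" and "odd p"
    and "q > 0" and "odd q"
    and "a < p * q" and "coprime a (p * q)"
    and "ord p a = p - 1"
    and "[int a ^ ((p - 1) div 2) = - 1] (mod int (p * q))"
    and "l dvd q" and "fermat_prime l" and "l \<ge> 5"
    and "l' dvd q" and "prime l'" and "[l' = 3] (mod 4)"
  shows "card (S_set p q a \<inter> shift1 (p * q) (S_set p q a)) = 0"
proof -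
  define d where "d = (p - 1) div 2"
  have h: "[int a ^ d = - 1] (mod int (p * q))" using assms(8) d_def by simp
  have lp: "prime l" and lm: "\<exists>m. l = 2 ^ (2 ^ m) + 1" using assms(10) fermat_prime_def by auto
  have ldv: "l dvd p * q" using assms(9) by simp
  have l'dv: "l' dvd p * q" using assms(12) by simp
  have ndl: "\<not> l dvd a"
    using assms(6) ldv lp by (metis coprime_common_divisor not_prime_unit)
  have ndl': "\<not> l' dvd a"
    using assms(6) l'dv assms(13) by (metis coprime_common_divisor not_prime_unit)
  have hl: "[int a ^ d = - 1] (mod int l)"
    using h ldv cong_dvd_modulus by (metis of_nat_dvd_iff)
  have hl': "[int a ^ d = - 1] (mod int l')"
    using h l'dv cong_dvd_modulus by (metis of_nat_dvd_iff)
  have dodd: "odd d" by (rule d_odd[OF assms(13) ndl' assms(14) hl'])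
  note o = aux_basic[OF lp ndl _ hl]
  obtain m where m: "l - 1 = 2 ^ (2 ^ m)" using lm by auto
  have "ord l a dvd 2 ^ (2 ^ m)" using o(2) assms(11) m by simp
  then obtain i where i: "ord l a = 2 ^ i" using divides_primepow_nat[of 2] by auto
  have "i \<le> 1"
  proof (rule ccontr)
    assume "\<not> i \<le> 1"
    hence "(4::nat) dvd 2 ^ i" by (metis le_imp_power_dvd not_le power2_eq_square numeral_Bit0 Suc_leI one_add_one numeral_times_numeral semiring_norm(12) num_double power_one_right le_refl less_imp_le_nat numeral_One one_less_numeral_iff semiring_norm(76) Suc_1 power_Suc2 power_Suc0_right)
    hence "4 dvd 2 * d" proof -
      have "l > 2" using assms(11) by simp
      thus ?thesis using o(1) i \<open>4 dvd 2 ^ i\<close> dvd_trans by metis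
    qed
    thus False using dodd by presburger
  qed
  hence "ord l a dvd 2" using i by (cases i) auto
  hence sq: "[a^2 = 1] (mod l)" using ord_divides by blast
  have "S_set p q a \<inter> shift1 (p * q) (S_set p q a) = {}"
  proof (rule ccontr)
    assume "S_set p q a \<inter> shift1 (p * q) (S_set p q a) \<noteq> {}"
    then obtain j k where "a ^ j mod (p*q) = (a ^ k mod (p*q) + 1) mod (p*q)"
      unfolding S_set_def shift1_def by auto
    hence "[a ^ j = a ^ k + 1] (mod (p*q))" unfolding cong_def by (metis mod_add_left_eq)
    hence "[a ^ j = a ^ k + 1] (mod l)" using ldv cong_dvd_modulus_nat by blast
    thus False using no_shift[OF sq assms(11) ndl] by blast
  qed
  thus ?thesis by simp
qed

end
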